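(* Let $X$ be a compact metric space, $A$ a unital simple $C^*$-algebra and $\phi:C(X)\to A$ a unital injective $*$-homomorphism. Let $G\subset X$ be open and suppose $\mu_\tau(\overline G\setminus G)=0$ for all $\tau\in T(A)$. Then $\tau\mapsto \tau(\phi(\chi_G))$ (with $\phi$ extended to bounded Borel functions with values in $A^{**}$) is continuous on $T(A)$; equivalently, for any $\varepsilon>0$ there exists $f\in C(X)$ with $0\le f\le 1$ and $f(t)=0$ for $t\in X\setminus G$ such that $|\tau(\phi(f))-\mu_\tau(G)|<\varepsilon$ for all $\tau\in T(A)$.
   Context: $T(A)$ is the tracial state space of $A$. For $\tau\in T(A)$, $\mu_\tau$ is the Borel probability measure on $X$ induced by the positive functional $\tau\circ\phi$ on $C(X)$. $\phi$ extends to a homomorphism from the algebra of bounded Borel functions on $X$ into the enveloping von Neumann algebra $A^{**}$, and tracial states extend normally to $A^{**}$. *)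

theory Defs
  imports "HOL-Analysis.Analysis"
begin

text \<open>A unital C*-algebra structure on a real Banach algebra with unit (norm 1 = 1):
  sc is complex scalar multiplication (extending scaleR), st the involution.\<close>
definition cstar_alg :: "(complex \<Rightarrow> 'a::{banach,real_normed_algebra_1} \<Rightarrow> 'a) \<Rightarrow> ('a \<Rightarrow> 'a) \<Rightarrow> bool" where
  "cstar_alg sc st \<longleftrightarrow>
     (\<forall>r x. sc (of_real r) x = scaleR r x) \<and>
     (\<forall>c d x. sc (c + d) x = sc c x + sc d x) \<and>
     (\<forall>c x y. sc c (x + y) = sc c x + sc c y) \<and>
     (\<forall>c d x. sc (c * d) x = sc c (sc d x)) \<and>
     (\<forall>c x y. sc c (x * y) = sc c x * y \<and> sc c (x * y) = x * sc c y) \<and>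
     (\<forall>c x. norm (sc c x) = cmod c * norm x) \<and>
     (\<forall>x y. st (x + y) = st x + st y) \<and>
     (\<forall>c x. st (sc c x) = sc (cnj c) (st x)) \<and>
     (\<forall>x y. st (x * y) = st y * st x) \<and>
     (\<forall>x. st (st x) = x) \<and>
     (\<forall>x. norm (st x * x) = (norm x)^2)"

definition closed_ideal :: "(complex \<Rightarrow> 'a::{banach,real_normed_algebra_1} \<Rightarrow> 'a) \<Rightarrow> 'a set \<Rightarrow> bool" where
  "closed_ideal sc I \<longleftrightarrow> 0 \<in> I \<and> closed I \<and> (\<forall>x\<in>I. \<forall>y\<in>I. x + y \<in> I) \<and>
     (\<forall>c. \<forall>x\<in>I. sc c x \<in> I) \<and> (\<forall>a. \<forall>x\<in>I. a * x \<in> I \<and> x * a \<in> I)"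

definition cstar_simple :: "(complex \<Rightarrow> 'a::{banach,real_normed_algebra_1} \<Rightarrow> 'a) \<Rightarrow> bool" where
  "cstar_simple sc \<longleftrightarrow> (\<forall>I. closed_ideal sc I \<longrightarrow> I = {0} \<or> I = UNIV)"

definition cpos :: "('a::{banach,real_normed_algebra_1} \<Rightarrow> 'a) \<Rightarrow> 'a \<Rightarrow> bool" where
  "cpos st x \<longleftrightarrow> (\<exists>b. x = st b * b)"

definition tracial_state :: "(complex \<Rightarrow> 'a::{banach,real_normed_algebra_1} \<Rightarrow> 'a) \<Rightarrow> ('a \<Rightarrow> 'a) \<Rightarrow> ('a \<Rightarrow> complex) \<Rightarrow> bool" where
  "tracial_state sc st \<tau> \<longleftrightarrow>
     (\<forall>x y. \<tau> (x + y) = \<tau> x + \<tau> y) \<and> (\<forall>c x. \<tau> (sc c x) = c * \<tau> x) \<and>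
     (\<forall>x. cpos st x \<longrightarrow> Im (\<tau> x) = 0 \<and> Re (\<tau> x) \<ge> 0) \<and>
     \<tau> 1 = 1 \<and> (\<forall>x y. \<tau> (x * y) = \<tau> (y * x))"

definition traces :: "(complex \<Rightarrow> 'a::{banach,real_normed_algebra_1} \<Rightarrow> 'a) \<Rightarrow> ('a \<Rightarrow> 'a) \<Rightarrow> ('a \<Rightarrow> complex) set" where
  "traces sc st = {\<tau>. tracial_state sc st \<tau>}"

definition weakstar_traces :: "(complex \<Rightarrow> 'a::{banach,real_normed_algebra_1} \<Rightarrow> 'a) \<Rightarrow> ('a \<Rightarrow> 'a) \<Rightarrow> ('a \<Rightarrow> complex) topology" where
  "weakstar_traces sc st = subtopology (product_topology (\<lambda>_. euclidean) UNIV) (traces sc st)"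

text \<open>Unital injective *-homomorphism C(X) -> A (only its values on continuous functions matter).\<close>
definition unital_inj_star_hom ::
  "(complex \<Rightarrow> 'a::{banach,real_normed_algebra_1} \<Rightarrow> 'a) \<Rightarrow> ('a \<Rightarrow> 'a) \<Rightarrow> (('x::topological_space \<Rightarrow> complex) \<Rightarrow> 'a) \<Rightarrow> bool" where
  "unital_inj_star_hom sc st \<phi> \<longleftrightarrow>
     (\<forall>f g. continuous_on UNIV f \<longrightarrow> continuous_on UNIV g \<longrightarrow>
        \<phi> (\<lambda>t. f t + g t) = \<phi> f + \<phi> g \<and> \<phi> (\<lambda>t. f t * g t) = \<phi> f * \<phi> g) \<and>
     (\<forall>c f. continuous_on UNIV f \<longrightarrow> \<phi> (\<lambda>t. c * f t) = sc c (\<phi> f)) \<and>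
     (\<forall>f. continuous_on UNIV f \<longrightarrow> \<phi> (\<lambda>t. cnj (f t)) = st (\<phi> f)) \<and>
     \<phi> (\<lambda>t. 1) = 1 \<and>
     inj_on \<phi> {f. continuous_on UNIV f}"

definition represents :: "(('x::topological_space \<Rightarrow> complex) \<Rightarrow> 'a) \<Rightarrow> ('a \<Rightarrow> complex) \<Rightarrow> 'x measure \<Rightarrow> bool" where
  "represents \<phi> \<tau> M \<longleftrightarrow> finite_measure M \<and> sets M = sets borel \<and>
     (\<forall>f. continuous_on UNIV f \<longrightarrow> integral\<^sup>L M f = \<tau> (\<phi> f))"

end

theory Submission
  imports Defs
begin


lemma st_basic:
  assumes A: "cstar_alg sc st"
  shows "st 0 = 0" "st (-x) = - st x" "st (x - y) = st x - st y" "st (r *\<^sub>R x) = r *\<^sub>R st x"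
    "st 1 = 1" "st (x + y) = st x + st y" "st (x * y) = st y * st x" "st (st x) = x"
proof -
  have add: "\<And>x y. st (x + y) = st x + st y" using A unfolding cstar_alg_def by blast
  show "st (x + y) = st x + st y" by (rule add)
  show z: "st 0 = 0" using add[of 0 0] by simp
  have n: "\<And>x. st (-x) = - st x" by (metis add[of x "-x" for x] z neg_eq_iff_add_eq_0 add.right_inverse)
  then show "st (-x) = - st x" .
  show "st (x - y) = st x - st y" using add[of x "-y"] n by simp
  have "st (sc (of_real r) x) = sc (cnj (of_real r)) (st x)" using A unfolding cstar_alg_def by blast
  moreover have "\<And>r x. sc (of_real r) x = r *\<^sub>R x" using A unfolding cstar_alg_def by auto
  ultimately show "st (r *\<^sub>R x) = r *\<^sub>R st x" by simp
  have m: "\<And>x y. st (x * y) = st y * st x" using A unfolding cstar_alg_def by blast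
  then show "st (x * y) = st y * st x" .
  have ss: "\<And>x. st (st x) = x" using A unfolding cstar_alg_def by blast
  then show "st (st x) = x" .
  have "st (1 * st 1) = st (st 1) * st 1" using m by blast
  then show "st 1 = 1" using ss by simp
qed

lemma st_power:
  assumes A: "cstar_alg sc st"
  shows "st (x ^ n) = (st x) ^ n"
  by (induction n) (simp_all add: st_basic[OF A] power_commutes)

lemma st_norm:
  assumes A: "cstar_alg sc st"
  shows "norm (st x) \<le> norm x"
proof -
  have "norm (st (st x) * st x) = (norm (st x))^2" using A unfolding cstar_alg_def by blast
  then have "(norm (st x))^2 = norm (x * st x)" using st_basic(8)[OF A] by simp
  also have "\<dots> \<le> norm x * norm (st x)" by (rule norm_mult_ineq)
  finally have "norm (st x) * norm (st x) \<le> norm x * norm (st x)" by (simp add: power2_eq_square)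
  then show ?thesis
    by (cases "norm (st x) = 0") (auto simp: mult_le_cancel_right)
qed

lemma st_bl:
  assumes A: "cstar_alg sc st"
  shows "bounded_linear st"
  by (rule bounded_linear_intro[where K=1]) (auto simp: st_basic[OF A] st_norm[OF A])

lemma sc_basic:
  assumes A: "cstar_alg sc st"
  shows "sc c 0 = 0" "sc c (-x) = - sc c x" "sc c (x - y) = sc c x - sc c y" "sc (of_real r) x = r *\<^sub>R x"
    "sc c (x + y) = sc c x + sc c y" "sc (c * d) x = sc c (sc d x)" "st (sc c x) = sc (cnj c) (st x)"
proof -
  have add: "\<And>x y. sc c (x + y) = sc c x + sc c y" using A unfolding cstar_alg_def by blast
  show "sc c (x + y) = sc c x + sc c y" by (rule add)
  show z: "sc c 0 = 0" using add[of 0 0] by simp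
  have n: "\<And>x. sc c (-x) = - sc c x" by (metis add[of x "-x" for x] z neg_eq_iff_add_eq_0 add.right_inverse)
  then show "sc c (-x) = - sc c x" .
  show "sc c (x - y) = sc c x - sc c y" using add[of x "-y"] n by simp
  show "sc (of_real r) x = r *\<^sub>R x" using A unfolding cstar_alg_def by auto
  show "sc (c * d) x = sc c (sc d x)" using A unfolding cstar_alg_def by blast
  show "st (sc c x) = sc (cnj c) (st x)" using A unfolding cstar_alg_def by blast
qed

lemma tau_basic:
  assumes T: "tracial_state sc st \<tau>" and A: "cstar_alg sc st"
  shows "\<tau> 0 = 0" "\<tau> (-x) = - \<tau> x" "\<tau> (x - y) = \<tau> x - \<tau> y" "\<tau> (r *\<^sub>R x) = of_real r * \<tau> x"
    "\<tau> (x + y) = \<tau> x + \<tau> y" "\<tau> (sc c x) = c * \<tau> x" "\<tau> 1 = 1"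
    "cpos st x \<Longrightarrow> Im (\<tau> x) = 0 \<and> Re (\<tau> x) \<ge> 0"
proof -
  have add: "\<And>x y. \<tau> (x + y) = \<tau> x + \<tau> y" using T unfolding tracial_state_def by blast
  show "\<tau> (x + y) = \<tau> x + \<tau> y" by (rule add)
  show z: "\<tau> 0 = 0" using add[of 0 0] by simp
  have n: "\<And>x. \<tau> (-x) = - \<tau> x" by (metis add[of x "-x" for x] z neg_eq_iff_add_eq_0 add.right_inverse)
  then show "\<tau> (-x) = - \<tau> x" .
  show "\<tau> (x - y) = \<tau> x - \<tau> y" using add[of x "-y"] n by simp
  have s: "\<And>c x. \<tau> (sc c x) = c * \<tau> x" using T unfolding tracial_state_def by blast
  then show "\<tau> (sc c x) = c * \<tau> x" .
  show "\<tau> (r *\<^sub>R x) = of_real r * \<tau> x" using s[of "of_real r" x] sc_basic(4)[OF A] by simp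
  show "\<tau> 1 = 1" using T unfolding tracial_state_def by blast
  show "cpos st x \<Longrightarrow> Im (\<tau> x) = 0 \<and> Re (\<tau> x) \<ge> 0" using T unfolding tracial_state_def by blast
qed

lemma half_gchoose_le: "\<bar>(1/2::real) gchoose n\<bar> \<le> 1"
proof (induction n)
  case 0 then show ?case by simp
next
  case (Suc n)
  have e: "of_nat (Suc n) * ((1/2::real) gchoose Suc n) = (1/2 - of_nat n) * ((1/2) gchoose n)"
    using gbinomial_mult_1[of "1/2::real" n] by (simp add: algebra_simps)
  have "real (Suc n) * \<bar>(1/2::real) gchoose Suc n\<bar> = \<bar>1/2 - real n\<bar> * \<bar>(1/2) gchoose n\<bar>"
    using arg_cong[OF e, of abs] by (simp add: abs_mult)
  also have "\<dots> \<le> real (Suc n) * 1"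
    using Suc.IH by (intro mult_mono) auto
  finally show ?case by (simp add: mult_le_cancel_left)
qed

lemma one_gchoose: "((1::real) gchoose k) = (if k = 0 then 1 else if k = 1 then 1 else 0)"
proof -
  have "((1::real) gchoose k) = of_nat (1 choose k)" using binomial_gbinomial[where 'a=real, of 1 k] by simp
  then show ?thesis by (cases k) (auto simp: binomial_eq_0)
qed

lemma sqrt_exists:
  assumes A: "cstar_alg sc st" and sa: "st h = h" and nh: "norm h < 1"
  shows "cpos st (1 - h)"
proof -
  define a where "a n = ((1/2::real) gchoose n)" for n
  define u where "u n = a n *\<^sub>R (-h)^n" for n
  have nu: "norm (u n) \<le> norm h ^ n" for n
  proof -
    have "norm (u n) = \<bar>a n\<bar> * norm ((-h)^n)" by (simp add: u_def)
    also have "\<dots> \<le> 1 * norm (-h) ^ n"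
      using half_gchoose_le[of n] by (intro mult_mono norm_power_ineq) (auto simp: a_def)
    finally show ?thesis by simp
  qed
  have su: "summable (\<lambda>n. norm (u n))"
    by (rule summable_comparison_test[OF _ summable_geometric[of "norm h"]]) (use nu nh in auto)
  define c where "c = suminf u"
  have cp: "(\<lambda>k. \<Sum>i\<le>k. u i * u (k - i)) sums (c * c)"
    unfolding c_def by (rule Cauchy_product_sums[OF su su])
  have trm: "(\<Sum>i\<le>k. u i * u (k - i)) = (if k = 0 then 1 else if k = 1 then -h else 0)" for k
  proof -
    have "(\<Sum>i\<le>k. u i * u (k - i)) = (\<Sum>i\<le>k. (a i * a (k - i)) *\<^sub>R (-h)^k)"
    proof (rule sum.cong[OF refl])
      fix i assume "i \<in> {..k}"
      then have "(-h)^i * (-h)^(k-i) = (-h)^k" by (simp add: power_add[symmetric])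
      then show "u i * u (k - i) = (a i * a (k - i)) *\<^sub>R (-h)^k"
        by (simp add: u_def)
    qed
    also have "\<dots> = (\<Sum>i\<le>k. a i * a (k - i)) *\<^sub>R (-h)^k" by (simp add: scaleR_sum_left)
    also have "(\<Sum>i\<le>k. a i * a (k - i)) = ((1::real) gchoose k)"
      using gbinomial_Vandermonde[of "1/2::real" "1/2" k] by (simp add: a_def atLeast0AtMost)
    finally show ?thesis by (simp add: one_gchoose)
  qed
  have "(\<lambda>k. (if k = 0 then 1 else if k = 1 then -h else 0)) sums (\<Sum>k\<in>{0,1::nat}. (if k = 0 then 1 else if k = 1 then -h else 0))"
    by (rule sums_finite) auto
  then have "(\<lambda>k. \<Sum>i\<le>k. u i * u (k - i)) sums (1 - h)" by (simp add: trm)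
  then have cc: "c * c = 1 - h" using cp sums_unique2 by blast
  have sus: "summable u" using su summable_norm_cancel by blast
  have "st c = (\<Sum>n. st (u n))" unfolding c_def by (rule bounded_linear.suminf[OF st_bl[OF A] sus])
  also have "(\<lambda>n. st (u n)) = u"
    by (rule ext) (simp add: u_def st_basic[OF A] st_power[OF A] sa)
  finally have "st c = c" by (simp add: c_def)
  then show ?thesis unfolding cpos_def using cc by metis
qed


lemma trace_sa_le1:
  assumes A: "cstar_alg sc st" and T: "tracial_state sc st \<tau>" and sa: "st h = h" and nh: "norm h < 1"
  shows "cmod (\<tau> h) \<le> 1"
proof -
  have p1: "Im (\<tau> (1 - h)) = 0 \<and> Re (\<tau> (1 - h)) \<ge> 0"
    by (rule tau_basic(8)[OF T A sqrt_exists[OF A sa nh]])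
  have "st (-h) = -h" using sa st_basic[OF A] by simp
  then have p2: "Im (\<tau> (1 - -h)) = 0 \<and> Re (\<tau> (1 - -h)) \<ge> 0"
    by (intro tau_basic(8)[OF T A sqrt_exists[OF A]]) (use nh in auto)
  have "\<tau> (1 - h) = 1 - \<tau> h" "\<tau> (1 - -h) = 1 + \<tau> h"
    using tau_basic[OF T A] by auto
  then have "Im (\<tau> h) = 0" "Re (\<tau> h) \<le> 1" "Re (\<tau> h) \<ge> -1" using p1 p2 by auto
  then show ?thesis by (simp add: cmod_def)
qed

lemma trace_sa_bound:
  assumes A: "cstar_alg sc st" and T: "tracial_state sc st \<tau>" and sa: "st h = h"
  shows "cmod (\<tau> h) \<le> 2 * norm h + 1"
proof -
  define r where "r = 2 * norm h + 1"
  have r: "r > 0" by (simp add: r_def add_nonneg_pos)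
  have "norm ((1/r) *\<^sub>R h) = norm h / r" using r by simp
  also have "\<dots> < 1" using r by (simp add: r_def)
  finally have "cmod (\<tau> ((1/r) *\<^sub>R h)) \<le> 1"
    by (intro trace_sa_le1[OF A T]) (simp_all add: st_basic[OF A] sa)
  then have "cmod (\<tau> h) / r \<le> 1" using r by (simp add: tau_basic[OF T A] norm_mult norm_divide)
  then show ?thesis using r by (simp add: r_def divide_le_eq)
qed

lemma trace_bound:
  assumes A: "cstar_alg sc st" and T: "tracial_state sc st \<tau>"
  shows "cmod (\<tau> x) \<le> 2 * norm ((1/2) *\<^sub>R (x + st x)) + 1 + (2 * norm (sc (-\<i>/2) (x - st x)) + 1)"
proof -
  define h where "h = (1/2) *\<^sub>R (x + st x)"
  define k where "k = sc (-\<i>/2) (x - st x)"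
  have sh: "st h = h" by (simp add: h_def st_basic[OF A] add.commute)
  have e1: "cnj (-\<i>/2) = (-\<i>/2) * complex_of_real (-1)" by (simp add: complex_eq_iff)
  have "st k = sc (cnj (-\<i>/2)) (st x - x)" by (simp add: k_def sc_basic[OF A] st_basic[OF A])
  also have "\<dots> = sc (-\<i>/2) (sc (complex_of_real (-1)) (st x - x))" by (simp only: e1 sc_basic(6)[OF A])
  also have "\<dots> = k"
  proof -
    have m1: "sc (-1) y = - y" for y using sc_basic(4)[OF A, of "-1" y] by simp
    show ?thesis by (simp add: sc_basic[OF A] k_def m1)
  qed
  finally have sk: "st k = k" .
  have e2: "\<i> * (-\<i>/2) = complex_of_real (1/2)" by (simp add: complex_eq_iff)
  have "sc \<i> k = (1/2) *\<^sub>R (x - st x)" unfolding k_def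
    by (simp only: sc_basic(6)[OF A, symmetric] e2 sc_basic(4)[OF A])
  then have "h + sc \<i> k = (1/2) *\<^sub>R (x + st x) + (1/2) *\<^sub>R (x - st x)" by (simp add: h_def)
  also have "\<dots> = ((1/2) + (1/2)) *\<^sub>R x"
    by (simp only: scaleR_add_right scaleR_diff_right scaleR_add_left) simp
  finally have "x = h + sc \<i> k" by simp
  then have "\<tau> x = \<tau> h + \<i> * \<tau> k" using tau_basic[OF T A] by metis
  then have "cmod (\<tau> x) \<le> cmod (\<tau> h) + cmod (\<tau> k)" using norm_triangle_ineq[of "\<tau> h" "\<i> * \<tau> k"]
    by (simp add: norm_mult)
  also have "\<dots> \<le> (2 * norm h + 1) + (2 * norm k + 1)"
    by (intro add_mono trace_sa_bound[OF A T] sh sk)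
  finally show ?thesis by (simp add: h_def k_def)
qed



abbreviation PT :: "('a \<Rightarrow> complex) topology" where
  "PT \<equiv> product_topology (\<lambda>_. euclidean) UNIV"

lemma topspace_PT [simp]: "topspace PT = UNIV"
  by (simp add: topspace_product_topology PiE_UNIV_domain)

lemma cm_ev: "continuous_map PT euclidean (\<lambda>\<tau>. \<tau> x)"
  using continuous_map_product_projection[of x UNIV "\<lambda>_. euclidean"] by simp

lemma cm_post:
  assumes "continuous_map X euclidean f" "continuous_on UNIV g"
  shows "continuous_map X euclidean (\<lambda>x. g (f x))"
  using continuous_map_compose[OF assms(1), of euclidean g] assms(2)
  by (simp add: continuous_map_iff_continuous2 o_def)

lemma closed_pointwise:
  assumes "\<And>i. continuous_map PT euclidean (g i)" "\<And>i. closed (C i)"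
  shows "closedin PT {\<tau>. \<forall>i. g i \<tau> \<in> C i}"
proof -
  have "{\<tau>. \<forall>i. g i \<tau> \<in> C i} = \<Inter> (range (\<lambda>i. {\<tau> \<in> topspace PT. g i \<tau> \<in> C i}))" by auto
  also have "closedin PT \<dots>"
  proof (rule closedin_Inter)
    fix S assume "S \<in> range (\<lambda>i. {\<tau> \<in> topspace PT. g i \<tau> \<in> C i})"
    then obtain i where "S = {\<tau> \<in> topspace PT. g i \<tau> \<in> C i}" by blast
    then show "closedin PT S"
      using closedin_continuous_map_preimage[OF assms(1)[of i], of "C i"] assms(2)[of i]
      by (simp add: closed_closedin[symmetric])
  qed auto
  finally show ?thesis .
qed

lemma traces_closed: "closedin PT (traces sc st)"
proof -
  have eq: "traces sc st =
    {\<tau>. \<forall>p. (\<lambda>\<tau>. \<tau> (fst p + snd p) - \<tau> (fst p) - \<tau> (snd p)) \<tau> \<in> {0}} \<inter>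
    {\<tau>. \<forall>p. (\<lambda>\<tau>. \<tau> (sc (fst p) (snd p)) - fst p * \<tau> (snd p)) \<tau> \<in> {0}} \<inter>
    {\<tau>. \<forall>x. (\<lambda>\<tau>. \<tau> x) \<tau> \<in> (if cpos st x then {z. Im z = 0 \<and> Re z \<ge> 0} else UNIV)} \<inter>
    {\<tau>. \<forall>i::unit. (\<lambda>\<tau>. \<tau> 1) \<tau> \<in> {1}} \<inter>
    {\<tau>. \<forall>p. (\<lambda>\<tau>. \<tau> (fst p * snd p) - \<tau> (snd p * fst p)) \<tau> \<in> {0}}"
    unfolding traces_def tracial_state_def by (auto simp: algebra_simps)
  have cl: "closed (if cpos st x then {z::complex. Im z = 0 \<and> Re z \<ge> 0} else UNIV)" for x
    by (auto intro!: closed_Collect_conj closed_Collect_eq closed_Collect_le continuous_intros)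
  show ?thesis unfolding eq
    by (intro closedin_Int closed_pointwise continuous_map_diff cm_ev cl closed_singleton
        cm_post[OF cm_ev] continuous_intros)
qed

lemma traces_compact:
  assumes A: "cstar_alg sc st"
  shows "compactin PT (traces sc st)"
proof -
  define K where "K x = 2 * norm ((1/2) *\<^sub>R (x + st x)) + 1 + (2 * norm (sc (-\<i>/2) (x - st x)) + 1)" for x
  have sub: "traces sc st \<subseteq> PiE UNIV (\<lambda>x. cball 0 (K x))"
    using trace_bound[OF A] by (auto simp: traces_def PiE_UNIV_domain K_def)
  have "compactin PT (PiE UNIV (\<lambda>x. cball 0 (K x)))"
    by (simp add: compactin_PiE compactin_euclidean_iff)
  then show ?thesis using sub traces_closed closed_compactin by blast
qed



lemma approx_open:
  fixes U :: "'x::metric_space set"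
  assumes U: "open U"
  shows "\<exists>f :: nat \<Rightarrow> 'x \<Rightarrow> real. (\<forall>n. continuous_on UNIV (f n)) \<and> (\<forall>n t. 0 \<le> f n t \<and> f n t \<le> 1) \<and>
    (\<forall>n t. t \<notin> U \<longrightarrow> f n t = 0) \<and> (\<forall>t. incseq (\<lambda>n. f n t)) \<and>
    (\<forall>t. (\<lambda>n. f n t) \<longlonglongrightarrow> indicator U t)"
proof -
  define D where "D t = (if U = UNIV then 1 else infdist t (-U))" for t
  have Dc: "continuous_on UNIV D"
    by (cases "U = UNIV") (auto simp: D_def intro!: continuous_intros)
  have D0: "D t \<ge> 0" for t by (simp add: D_def infdist_nonneg)
  have Dz: "t \<notin> U \<Longrightarrow> D t = 0" for t by (auto simp: D_def infdist_zero)
  have Dp: "t \<in> U \<Longrightarrow> D t > 0" for t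
    using U by (auto simp: D_def intro!: infdist_pos_not_in_closed)
  define f where "f n t = min 1 (real n * D t)" for n t
  have "\<forall>n. continuous_on UNIV (f n)" unfolding f_def by (auto intro!: continuous_intros Dc)
  moreover have "\<forall>n t. 0 \<le> f n t \<and> f n t \<le> 1" by (simp add: f_def D0)
  moreover have "\<forall>n t. t \<notin> U \<longrightarrow> f n t = 0" by (simp add: f_def Dz)
  moreover have "\<forall>t. incseq (\<lambda>n. f n t)"
  proof (intro allI incseq_SucI)
    fix t n
    have "real n * D t \<le> real (Suc n) * D t" by (rule mult_right_mono) (use D0 in auto)
    then show "f n t \<le> f (Suc n) t" unfolding f_def by (rule min.mono[OF order_refl])
  qed
  moreover have "\<forall>t. (\<lambda>n. f n t) \<longlonglongrightarrow> indicator U t"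
  proof
    fix t
    show "(\<lambda>n. f n t) \<longlonglongrightarrow> indicator U t"
    proof (cases "t \<in> U")
      case False then show ?thesis by (simp add: f_def Dz)
    next
      case True
      then have d: "D t > 0" by (rule Dp)
      have "eventually (\<lambda>n. f n t = indicator U t) sequentially"
        unfolding eventually_sequentially
      proof (intro exI allI impI)
        fix n assume "nat \<lceil>1 / D t\<rceil> \<le> n"
        then have "1 / D t \<le> real n" by linarith
        then have "1 \<le> real n * D t" using d by (simp add: divide_le_eq)
        then show "f n t = indicator U t" using True by (simp add: f_def)
      qed
      then show ?thesis by (rule tendsto_eventually)
    qed
  qed
  ultimately show ?thesis by blast
qed

lemma integral_conv:
  fixes U :: "'x::metric_space set"
  assumes M: "finite_measure M" "sets M = sets borel" and U: "open U"
    and fc: "\<forall>n. continuous_on UNIV (f n)" and f01: "\<forall>n t. 0 \<le> f n t \<and> f n t \<le> 1"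
    and fz: "\<forall>n t. t \<notin> U \<longrightarrow> f n t = 0" and fl: "\<forall>t. (\<lambda>n. f n t) \<longlonglongrightarrow> indicator U t"
    and finc: "\<forall>t. incseq (\<lambda>n. f n t)"
  shows "(\<lambda>n. integral\<^sup>L M (f n)) \<longlonglongrightarrow> measure M U" "integral\<^sup>L M (f n) \<le> measure M U"
    "incseq (\<lambda>n. integral\<^sup>L M (f n))"
proof -
  interpret finite_measure M by (rule M(1))
  have Us: "U \<in> sets M" using M(2) U by simp
  have fm: "f n \<in> borel_measurable M" for n
    using borel_measurable_continuous_onI[OF fc[rule_format, of n]] measurable_cong_sets[OF M(2) refl, of borel] by metis
  have im: "indicator U \<in> borel_measurable M" using Us by simp
  have fi: "integrable M (f n)" for n
    by (rule integrable_const_bound[where B=1]) (use f01 fm in auto)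
  have "(\<lambda>n. integral\<^sup>L M (f n)) \<longlonglongrightarrow> integral\<^sup>L M (indicator U :: 'x \<Rightarrow> real)"
    by (rule integral_dominated_convergence[where w="\<lambda>_. 1"]) (use fm im fl f01 in auto)
  then show "(\<lambda>n. integral\<^sup>L M (f n)) \<longlonglongrightarrow> measure M U" using Us by simp
  have "integral\<^sup>L M (f n) \<le> integral\<^sup>L M (indicator U :: 'x \<Rightarrow> real)"
  proof (rule integral_mono)
    show "integrable M (indicator U :: 'x \<Rightarrow> real)"
      by (rule integrable_const_bound[where B=1]) (use im in auto)
  qed (use fi Us f01 fz in \<open>auto simp: indicator_def\<close>)
  then show "integral\<^sup>L M (f n) \<le> measure M U" using Us by simp
  show "incseq (\<lambda>n. integral\<^sup>L M (f n))"
  proof (rule incseq_SucI)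
    fix n show "integral\<^sup>L M (f n) \<le> integral\<^sup>L M (f (Suc n))"
      by (rule integral_mono[OF fi fi]) (use finc in \<open>auto simp: incseq_Suc_iff\<close>)
  qed
qed

theorem lemma3p5:
  fixes sc :: "complex \<Rightarrow> 'a::{banach,real_normed_algebra_1} \<Rightarrow> 'a"
    and st :: "'a \<Rightarrow> 'a"
    and \<phi> :: "('x::metric_space \<Rightarrow> complex) \<Rightarrow> 'a"
    and \<mu> :: "('a \<Rightarrow> complex) \<Rightarrow> 'x measure"
    and G :: "'x set"
  assumes "compact (UNIV :: 'x set)"
    and "cstar_alg sc st"
    and "cstar_simple sc"
    and "unital_inj_star_hom sc st \<phi>"
    and "\<forall>\<tau>\<in>traces sc st. represents \<phi> \<tau> (\<mu> \<tau>)"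
    and "open G"
    and "\<forall>\<tau>\<in>traces sc st. measure (\<mu> \<tau>) (closure G - G) = 0"
  shows "continuous_map (weakstar_traces sc st) euclidean (\<lambda>\<tau>. measure (\<mu> \<tau>) G) \<and>
    (\<forall>\<epsilon>>0. \<exists>f :: 'x \<Rightarrow> real. continuous_on UNIV f \<and> (\<forall>t. 0 \<le> f t \<and> f t \<le> 1) \<and>
        (\<forall>t. t \<notin> G \<longrightarrow> f t = 0) \<and>
        (\<forall>\<tau>\<in>traces sc st. cmod (\<tau> (\<phi> (\<lambda>t. complex_of_real (f t))) - complex_of_real (measure (\<mu> \<tau>) G)) < \<epsilon>))"
proof -
  note A = assms(2)
  let ?W = "weakstar_traces sc st"
  have tW: "topspace ?W = traces sc st" by (simp add: weakstar_traces_def topspace_subtopology)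
  have cmW: "continuous_map ?W euclidean (\<lambda>\<tau>. Re (\<tau> c))" for c
    unfolding weakstar_traces_def
    by (rule continuous_map_from_subtopology[OF cm_post[OF cm_ev]]) (intro continuous_intros)
  have R: "finite_measure (\<mu> \<tau>)" "sets (\<mu> \<tau>) = sets borel"
    if "\<tau> \<in> traces sc st" for \<tau> using assms(5) that by (auto simp: represents_def)
  have rep: "\<tau> (\<phi> (\<lambda>t. complex_of_real (g t))) = of_real (integral\<^sup>L (\<mu> \<tau>) g)"
    if "\<tau> \<in> traces sc st" "continuous_on UNIV g" for \<tau> g
  proof -
    have "continuous_on UNIV (\<lambda>t. complex_of_real (g t))" using that(2) by (intro continuous_intros)
    moreover have "\<forall>f. continuous_on UNIV f \<longrightarrow> integral\<^sup>L (\<mu> \<tau>) f = \<tau> (\<phi> f)"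
      using assms(5) that(1) by (simp add: represents_def)
    ultimately have "integral\<^sup>L (\<mu> \<tau>) (\<lambda>t. complex_of_real (g t)) = \<tau> (\<phi> (\<lambda>t. complex_of_real (g t)))"
      by blast
    then show ?thesis by simp
  qed
  have lsc: "openin ?W {\<tau> \<in> topspace ?W. a < measure (\<mu> \<tau>) U}" if U: "open U" for U a
  proof -
    obtain f :: "nat \<Rightarrow> 'x \<Rightarrow> real" where fc: "\<forall>n. continuous_on UNIV (f n)"
      and f01: "\<forall>n t. 0 \<le> f n t \<and> f n t \<le> 1" and fz: "\<forall>n t. t \<notin> U \<longrightarrow> f n t = 0"
      and finc: "\<forall>t. incseq (\<lambda>n. f n t)" and fl: "\<forall>t. (\<lambda>n. f n t) \<longlonglongrightarrow> indicator U t"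
      using approx_open[OF U] by blast
    note IC = integral_conv[OF R U fc f01 fz fl finc]
    have "{\<tau> \<in> topspace ?W. a < measure (\<mu> \<tau>) U} =
      (\<Union>n. {\<tau> \<in> topspace ?W. Re (\<tau> (\<phi> (\<lambda>t. complex_of_real (f n t)))) \<in> {a<..}})"
    proof (intro equalityI subsetI)
      fix \<tau> assume "\<tau> \<in> {\<tau> \<in> topspace ?W. a < measure (\<mu> \<tau>) U}"
      then have t: "\<tau> \<in> traces sc st" and a: "a < measure (\<mu> \<tau>) U" using tW by auto
      have "eventually (\<lambda>n. a < integral\<^sup>L (\<mu> \<tau>) (f n)) sequentially"
        by (rule order_tendstoD(1)[OF IC(1)[OF t t] a])
      then obtain n where "a < integral\<^sup>L (\<mu> \<tau>) (f n)" using eventually_sequentially by auto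
      then show "\<tau> \<in> (\<Union>n. {\<tau> \<in> topspace ?W. Re (\<tau> (\<phi> (\<lambda>t. complex_of_real (f n t)))) \<in> {a<..}})"
        using t tW rep[OF t fc[rule_format]] by auto
    next
      fix \<tau> assume "\<tau> \<in> (\<Union>n. {\<tau> \<in> topspace ?W. Re (\<tau> (\<phi> (\<lambda>t. complex_of_real (f n t)))) \<in> {a<..}})"
      then obtain n where t: "\<tau> \<in> traces sc st" and "a < Re (\<tau> (\<phi> (\<lambda>t. complex_of_real (f n t))))"
        using tW by auto
      then have "a < integral\<^sup>L (\<mu> \<tau>) (f n)" using rep[OF t fc[rule_format]] by simp
      then show "\<tau> \<in> {\<tau> \<in> topspace ?W. a < measure (\<mu> \<tau>) U}"
        using IC(2)[OF t t, of n] t tW by auto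
    qed
    also have "openin ?W \<dots>"
    proof -
      have "openin ?W {\<tau> \<in> topspace ?W. Re (\<tau> (\<phi> (\<lambda>t. complex_of_real (f n t)))) \<in> {a<..}}" for n
        by (rule openin_continuous_map_preimage[OF cmW]) (simp add: open_openin[symmetric])
      then show ?thesis by (intro openin_Union) blast
    qed
    finally show ?thesis .
  qed
  have compl: "measure (\<mu> \<tau>) G = 1 - measure (\<mu> \<tau>) (- closure G)" if t: "\<tau> \<in> traces sc st" for \<tau>
  proof -
    interpret finite_measure "\<mu> \<tau>" by (rule R(1)[OF t])
    have sp: "space (\<mu> \<tau>) = UNIV" using sets_eq_imp_space_eq[OF R(2)[OF t]] by simp
    have "\<forall>f. continuous_on UNIV f \<longrightarrow> integral\<^sup>L (\<mu> \<tau>) f = \<tau> (\<phi> f)"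
      using assms(5) t by (simp add: represents_def)
    then have "integral\<^sup>L (\<mu> \<tau>) (\<lambda>t. (1::complex)) = \<tau> (\<phi> (\<lambda>t. 1))"
      using continuous_on_const by blast
    also have "\<dots> = 1" using assms(4) t
      by (simp add: unital_inj_star_hom_def traces_def tracial_state_def)
    finally have m1: "measure (\<mu> \<tau>) UNIV = 1" using sp by (simp add: complex_eq_iff)
    have Gs: "G \<in> sets (\<mu> \<tau>)" "closure G \<in> sets (\<mu> \<tau>)" using R(2)[OF t] assms(6) by auto
    have "measure (\<mu> \<tau>) (- closure G) = 1 - measure (\<mu> \<tau>) (closure G)"
      using finite_measure_compl[OF Gs(2)] sp m1 by (simp add: Compl_eq_Diff_UNIV)
    moreover have "measure (\<mu> \<tau>) (closure G - G) = measure (\<mu> \<tau>) (closure G) - measure (\<mu> \<tau>) G"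
      by (rule finite_measure_Diff[OF Gs(2) Gs(1) closure_subset])
    ultimately show ?thesis using assms(7) t by auto
  qed
  have part1: "continuous_map ?W euclidean (\<lambda>\<tau>. measure (\<mu> \<tau>) G)"
    unfolding continuous_map_upper_lower_semicontinuous_lt
  proof (intro conjI allI)
    fix a show "openin ?W {x \<in> topspace ?W. a < measure (\<mu> x) G}" by (rule lsc[OF assms(6)])
  next
    fix a
    have "{x \<in> topspace ?W. measure (\<mu> x) G < a} = {x \<in> topspace ?W. 1 - a < measure (\<mu> x) (- closure G)}"
      using compl tW by auto
    also have "openin ?W \<dots>" by (rule lsc) auto
    finally show "openin ?W {x \<in> topspace ?W. measure (\<mu> x) G < a}" .
  qed
  have part2: "\<exists>f :: 'x \<Rightarrow> real. continuous_on UNIV f \<and> (\<forall>t. 0 \<le> f t \<and> f t \<le> 1) \<and>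
        (\<forall>t. t \<notin> G \<longrightarrow> f t = 0) \<and>
        (\<forall>\<tau>\<in>traces sc st. cmod (\<tau> (\<phi> (\<lambda>t. complex_of_real (f t))) - complex_of_real (measure (\<mu> \<tau>) G)) < \<epsilon>)"
    if e: "\<epsilon> > 0" for \<epsilon>
  proof -
    obtain f :: "nat \<Rightarrow> 'x \<Rightarrow> real" where fc: "\<forall>n. continuous_on UNIV (f n)"
      and f01: "\<forall>n t. 0 \<le> f n t \<and> f n t \<le> 1" and fz: "\<forall>n t. t \<notin> G \<longrightarrow> f n t = 0"
      and finc: "\<forall>t. incseq (\<lambda>n. f n t)" and fl: "\<forall>t. (\<lambda>n. f n t) \<longlonglongrightarrow> indicator G t"
      using approx_open[OF assms(6)] by blast
    note IC = integral_conv[OF R assms(6) fc f01 fz fl finc]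
    define Op where "Op n = {\<tau> \<in> topspace ?W. measure (\<mu> \<tau>) G - Re (\<tau> (\<phi> (\<lambda>t. complex_of_real (f n t)))) \<in> {..<\<epsilon>}}" for n
    have Oo: "openin ?W (Op n)" for n
      unfolding Op_def
      by (rule openin_continuous_map_preimage[OF continuous_map_diff[OF part1 cmW]]) (simp add: open_openin[symmetric])
    have Oi: "Op n = {\<tau> \<in> traces sc st. measure (\<mu> \<tau>) G - integral\<^sup>L (\<mu> \<tau>) (f n) < \<epsilon>}" for n
      unfolding Op_def tW by (auto simp: rep[OF _ fc[rule_format]])
    have cov: "topspace ?W \<subseteq> \<Union> (range Op)"
    proof
      fix \<tau> assume "\<tau> \<in> topspace ?W"
      then have t: "\<tau> \<in> traces sc st" using tW by simp
      have "(\<lambda>n. measure (\<mu> \<tau>) G - integral\<^sup>L (\<mu> \<tau>) (f n)) \<longlonglongrightarrow> measure (\<mu> \<tau>) G - measure (\<mu> \<tau>) G"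
        by (intro tendsto_intros IC(1)[OF t t])
      then have "eventually (\<lambda>n. measure (\<mu> \<tau>) G - integral\<^sup>L (\<mu> \<tau>) (f n) < \<epsilon>) sequentially"
        using e by (intro order_tendstoD(2)) auto
      then obtain n where "measure (\<mu> \<tau>) G - integral\<^sup>L (\<mu> \<tau>) (f n) < \<epsilon>" using eventually_sequentially by auto
      then show "\<tau> \<in> \<Union> (range Op)" using t Oi by auto
    qed
    have "compact_space ?W" unfolding weakstar_traces_def
      by (rule compact_space_subtopology[OF traces_compact[OF A]])
    then have "compactin ?W (topspace ?W)" by (simp add: compact_space_def)
    then obtain F where F: "finite F" "F \<subseteq> range Op" "topspace ?W \<subseteq> \<Union> F"
      unfolding compactin_def using Oo cov by (metis imageE)
    then obtain N where N: "finite N" "F = Op ` N" by (meson finite_subset_image)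
    define n where "n = Max (insert 0 N)"
    have mono: "Op m \<subseteq> Op n" if "m \<in> N" for m
    proof -
      have "m \<le> n" using that N(1) by (simp add: n_def)
      then show ?thesis unfolding Oi using IC(3) by (force simp: incseq_def)
    qed
    have all: "\<tau> \<in> Op n" if t: "\<tau> \<in> traces sc st" for \<tau>
      using F(3) N(2) mono t tW by blast
    show ?thesis
    proof (intro exI conjI allI ballI)
      show "continuous_on UNIV (f n)" using fc by blast
      fix t show "0 \<le> f n t" "f n t \<le> 1" using f01 by auto
      show "t \<notin> G \<longrightarrow> f n t = 0" using fz by auto
    next
      fix \<tau> assume t: "\<tau> \<in> traces sc st"
      have "cmod (\<tau> (\<phi> (\<lambda>t. complex_of_real (f n t))) - complex_of_real (measure (\<mu> \<tau>) G))
          = \<bar>integral\<^sup>L (\<mu> \<tau>) (f n) - measure (\<mu> \<tau>) G\<bar>"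
        using rep[OF t fc[rule_format]] by (simp flip: of_real_diff)
      also have "\<dots> = measure (\<mu> \<tau>) G - integral\<^sup>L (\<mu> \<tau>) (f n)" using IC(2)[OF t t, of n] by simp
      also have "\<dots> < \<epsilon>" using all[OF t] Oi by auto
      finally show "cmod (\<tau> (\<phi> (\<lambda>t. complex_of_real (f n t))) - complex_of_real (measure (\<mu> \<tau>) G)) < \<epsilon>" .
    qed
  qed
  show ?thesis using part1 part2 by blast
qed


end
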